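(* Let $\beta\in(0,1)$ and let $p_1\ge p_2\ge\cdots>0$, $\sum_\ell p_\ell=1$, satisfy $\max\{\ell\in\mathbb N:1/p_\ell\le x\}=x^\beta L(x)$ with $L$ slowly varying at infinity. Let $Y_1,Y_2,\dots$ be i.i.d. with $\mathbb P(Y_1=\ell)=p_\ell$, and let $0<\tau_1<\tau_2<\cdots$ be the arrival times of a standard Poisson process on $\mathbb R_+$ independent of $\{Y_i\}$. Define $\widetilde K_{n,\ell}=\sum_{i\ge1}\mathbf 1\{Y_i=\ell,\tau_i\le n\}$, $\widetilde K_n=\sum_{\ell\ge1}\mathbf 1\{\widetilde K_{n,\ell}\ne0\}$ and $\widetilde\Phi_n=\mathbb E\widetilde K_n$. Then for every real constant $c$, \[ \frac{\widetilde\Phi_n}{(\widetilde K_n+c)\vee1}\to1\quad\text{as }n\to\infty, \] almost surely and in $L^p$ for every $p\ge1$. *)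

theory Defs
  imports "HOL-Probability.Probability"
begin

definition nu_count :: "(nat \<Rightarrow> real) \<Rightarrow> real \<Rightarrow> nat" where
  "nu_count p x = Max (insert 0 {l. 1 \<le> l \<and> 1 / p l \<le> x})"

definition slowly_varying :: "(real \<Rightarrow> real) \<Rightarrow> bool" where
  "slowly_varying L \<longleftrightarrow> L \<in> borel_measurable borel \<and> (\<forall>\<^sub>F x in at_top. 0 < L x) \<and>
     (\<forall>a>0. ((\<lambda>x. L (a * x) / L x) \<longlongrightarrow> 1) at_top)"

text \<open>Arrival times of the Poisson process built from interarrival times E 0, E 1, ...:
  tau i = E 0 + ... + E i  (index i here corresponds to tau_(i+1) in the paper).\<close>
definition arrival :: "(nat \<Rightarrow> 'a \<Rightarrow> real) \<Rightarrow> nat \<Rightarrow> 'a \<Rightarrow> real" where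
  "arrival E i \<omega> = (\<Sum>j\<le>i. E j \<omega>)"

definition Ktil_l :: "(nat \<Rightarrow> 'a \<Rightarrow> nat) \<Rightarrow> (nat \<Rightarrow> 'a \<Rightarrow> real) \<Rightarrow> real \<Rightarrow> nat \<Rightarrow> 'a \<Rightarrow> ennreal" where
  "Ktil_l Y E t l \<omega> = (\<Sum>i. if Y i \<omega> = l \<and> arrival E i \<omega> \<le> t then 1 else 0)"

definition Ktil :: "(nat \<Rightarrow> 'a \<Rightarrow> nat) \<Rightarrow> (nat \<Rightarrow> 'a \<Rightarrow> real) \<Rightarrow> real \<Rightarrow> 'a \<Rightarrow> nat" where
  "Ktil Y E t \<omega> = card {l. 1 \<le> l \<and> Ktil_l Y E t l \<omega> \<noteq> 0}"

end

theory Submission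
  imports Defs "HOL-Real_Asymp.Real_Asymp"
begin

locale kset = prob_space M for M :: "'a measure" +
  fixes p :: "nat \<Rightarrow> real" and Y :: "nat \<Rightarrow> 'a \<Rightarrow> nat" and E :: "nat \<Rightarrow> 'a \<Rightarrow> real"
  assumes ppos: "\<forall>l\<ge>1. 0 < p l" and psum: "(\<lambda>l. p (Suc l)) sums 1"
  and Ymeas: "\<forall>i. Y i \<in> measurable M (count_space UNIV)"
  and Ydist: "\<forall>i l. l \<ge> 1 \<longrightarrow> measure M {\<omega> \<in> space M. Y i \<omega> = l} = p l"
  and Edist: "\<forall>j. distributed M lborel (E j) (exponential_density 1)"
  and indep: "indep_vars (\<lambda>_. borel)
           (\<lambda>k. case k of Inl i \<Rightarrow> (\<lambda>\<omega>. real (Y i \<omega>)) | Inr j \<Rightarrow> E j) UNIV"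
begin

definition XX :: "nat + nat \<Rightarrow> 'a \<Rightarrow> real" where
  "XX = (\<lambda>k. case k of Inl i \<Rightarrow> (\<lambda>\<omega>. real (Y i \<omega>)) | Inr j \<Rightarrow> E j)"

lemma indepX: "indep_vars (\<lambda>_. borel) XX UNIV"
  using indep unfolding XX_def .

lemma Y_meas[measurable]: "Y i \<in> measurable M (count_space UNIV)"
  using Ymeas by auto

lemma E_meas[measurable]: "E j \<in> borel_measurable M"
  using distributed_measurable[OF Edist[rule_format, of j]] by simp

lemma arrival_meas[measurable]: "arrival E i \<in> borel_measurable M"
  unfolding arrival_def[abs_def] by measurable

lemma E_pos: "AE \<omega> in M. \<forall>j. 0 < E j \<omega>"
proof (subst AE_all_countable, intro allI)
  fix j
  have "prob {\<omega> \<in> space M. E j \<omega> \<le> 0} = 0"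
    using exponential_distributedD_le[OF Edist[rule_format, of j], of 0] by simp
  then show "AE \<omega> in M. 0 < E j \<omega>"
    by (subst AE_iff_measurable[where N="{\<omega> \<in> space M. E j \<omega> \<le> 0}"])
       (auto simp: emeasure_eq_measure not_less)
qed

lemma arrival_mono:
  assumes "\<forall>j. 0 < E j \<omega>" "i \<le> k"
  shows "arrival E i \<omega> \<le> arrival E k \<omega>"
  unfolding arrival_def using assms
  by (intro sum_mono2) (auto intro: less_imp_le)

lemma arrival_dist:
  assumes "0 \<le> t"
  shows "prob {\<omega> \<in> space M. t < arrival E j \<omega>} = (\<Sum>k\<le>j. t ^ k * exp (- t) / fact k)"
proof -
  have inj: "inj_on (Inr :: nat \<Rightarrow> nat + nat) {..j}" by (auto simp: inj_on_def)
  have D: "distributed M lborel (\<lambda>x. \<Sum>i\<in>Inr ` {..j}. XX i x) (erlang_density (card (Inr ` {..j} :: (nat+nat) set) - 1) 1)"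
  proof (rule exponential_distributed_sum)
    show "indep_vars (\<lambda>_. borel) XX (Inr ` {..j})" by (rule indep_vars_subset[OF indepX]) auto
  qed (auto simp: XX_def Edist)
  have c: "card (Inr ` {..j} :: (nat+nat) set) - 1 = j"
    using card_image[OF inj] by simp
  have s: "(\<lambda>x. \<Sum>i\<in>Inr ` {..j}. XX i x) = arrival E j"
    by (auto simp: sum.reindex[OF inj] XX_def arrival_def fun_eq_iff)
  have "prob {\<omega> \<in> space M. t < arrival E j \<omega>} = 1 - erlang_CDF j 1 t"
    using erlang_distributed_gt[OF D[unfolded c s], of t] assms by simp
  then show ?thesis using assms by (simp add: erlang_CDF_def)
qed

lemma arrival_unbounded: "AE \<omega> in M. \<forall>n::nat. \<exists>m. real n < arrival E m \<omega>"
proof (subst AE_all_countable, intro allI)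
  fix n :: nat
  let ?N = "{\<omega> \<in> space M. \<forall>m. arrival E m \<omega> \<le> real n}"
  have Nm: "?N \<in> events" by measurable
  have le: "prob ?N \<le> 1 - (\<Sum>k\<le>m. real n ^ k * exp (- real n) / fact k)" for m
  proof -
    have "prob ?N \<le> prob (space M - {\<omega> \<in> space M. real n < arrival E m \<omega>})"
      by (intro finite_measure_mono) (auto dest: spec[where x=m])
    also have "\<dots> = 1 - (\<Sum>k\<le>m. real n ^ k * exp (- real n) / fact k)"
      by (subst prob_compl) (auto simp: arrival_dist)
    finally show ?thesis .
  qed
  have "(\<lambda>m. \<Sum>k\<le>m. real n ^ k / fact k) \<longlonglongrightarrow> exp (real n)"
    using exp_converges[of "real n"] unfolding sums_def_le by (simp add: divide_inverse mult.commute)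
  then have "(\<lambda>m. (\<Sum>k\<le>m. real n ^ k / fact k) * exp (- real n)) \<longlonglongrightarrow> exp (real n) * exp (- real n)"
    by (intro tendsto_intros)
  then have "(\<lambda>m. 1 - (\<Sum>k\<le>m. real n ^ k * exp (- real n) / fact k)) \<longlonglongrightarrow> 1 - exp (real n) * exp (- real n)"
    by (intro tendsto_intros) (simp add: sum_distrib_right)
  then have "(\<lambda>m. 1 - (\<Sum>k\<le>m. real n ^ k * exp (- real n) / fact k)) \<longlonglongrightarrow> 0"
    by (simp add: exp_minus)
  then have "prob ?N \<le> 0"
    using le by (intro LIMSEQ_le_const[of _ 0]) auto
  then have "prob ?N = 0" using measure_nonneg[of M ?N] by linarith
  then show "AE \<omega> in M. \<exists>m. real n < arrival E m \<omega>"
    by (subst AE_iff_measurable[where N="?N"]) (auto simp: emeasure_eq_measure not_less)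
qed

lemma prob_Y_in:
  assumes "finite S" "S \<subseteq> {1..}"
  shows "prob {\<omega> \<in> space M. Y i \<omega> \<in> S} = (\<Sum>l\<in>S. p l)"
  using assms
proof (induction S rule: finite_induct)
  case empty then show ?case by simp
next
  case (insert l S)
  have "{\<omega> \<in> space M. Y i \<omega> \<in> insert l S} = {\<omega> \<in> space M. Y i \<omega> = l} \<union> {\<omega> \<in> space M. Y i \<omega> \<in> S}"
    by auto
  moreover have "prob ({\<omega> \<in> space M. Y i \<omega> = l} \<union> {\<omega> \<in> space M. Y i \<omega> \<in> S}) = prob {\<omega> \<in> space M. Y i \<omega> = l} + prob {\<omega> \<in> space M. Y i \<omega> \<in> S}"
    by (rule finite_measure_Union) (use insert in auto)
  ultimately have "prob {\<omega> \<in> space M. Y i \<omega> \<in> insert l S} = prob {\<omega> \<in> space M. Y i \<omega> = l} + prob {\<omega> \<in> space M. Y i \<omega> \<in> S}"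
    by simp
  then show ?case using insert Ydist by auto
qed

end

context kset begin

lemma prob_Y_indep:
  assumes "finite J" "J \<noteq> {}"
  shows "prob {\<omega>\<in>space M. \<forall>i\<in>J. Y i \<omega> \<in> B i} = (\<Prod>i\<in>J. prob {\<omega>\<in>space M. Y i \<omega> \<in> B i})"
proof -
  let ?A = "\<lambda>k. case k of Inl i \<Rightarrow> real ` B i | Inr j \<Rightarrow> (UNIV :: real set)"
  have A: "?A k \<in> sets borel" for k
    by (cases k) (auto intro!: sets.countable[OF borel_closed] countable_image)
  have "prob (\<Inter>k\<in>Inl`J. XX k -` ?A k \<inter> space M) = (\<Prod>k\<in>Inl`J. prob (XX k -` ?A k \<inter> space M))"
    by (rule indep_varsD[OF indepX]) (use assms A in auto)
  moreover have "(\<Inter>k\<in>Inl`J. XX k -` ?A k \<inter> space M) = {\<omega>\<in>space M. \<forall>i\<in>J. Y i \<omega> \<in> B i}"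
    using assms(2) by (auto simp: XX_def image_iff)
  moreover have "XX (Inl i) -` ?A (Inl i) \<inter> space M = {\<omega>\<in>space M. Y i \<omega> \<in> B i}" for i
    by (auto simp: XX_def image_iff)
  ultimately show ?thesis by (simp add: prod.reindex inj_on_def)
qed

lemma prob_first_hit:
  assumes "0 \<le> t" "finite S" "S \<subseteq> {1..}"
  shows "prob {\<omega>\<in>space M. (Y j \<omega> \<in> S \<and> (\<forall>i<j. Y i \<omega> \<notin> S)) \<and> t < arrival E j \<omega>}
       = (1 - sum p S) ^ j * sum p S * (\<Sum>k\<le>j. t ^ k * exp (- t) / fact k)"
proof -
  have IV: "indep_var (PiM (Inl`{..j}) (\<lambda>_. borel)) (\<lambda>\<omega>. restrict (\<lambda>k. XX k \<omega>) (Inl`{..j}))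
                      (PiM (Inr`{..j}) (\<lambda>_. borel)) (\<lambda>\<omega>. restrict (\<lambda>k. XX k \<omega>) (Inr`{..j}))"
    by (rule indep_var_restrict[OF indepX]) auto
  define f1 where "f1 g = (g (Inl j) \<in> real ` S \<and> (\<forall>i\<in>{..<j}. \<not> g (Inl i) \<in> real ` S))" for g :: "nat+nat \<Rightarrow> real"
  define f2 where "f2 g = (\<Sum>i\<le>j. g (Inr i))" for g :: "nat+nat \<Rightarrow> real"
  have Sb: "real ` S \<in> sets borel"
    using assms(2) by (intro borel_closed finite_imp_closed) auto
  have c: "(\<lambda>g. g (Inl i)) \<in> borel_measurable (PiM (Inl`{..j}) (\<lambda>_. borel))" if "i \<le> j" for i
    using measurable_component_singleton[of "Inl i" "Inl`{..j}" "\<lambda>_. borel"] that by simp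
  have "Measurable.pred (PiM (Inl`{..j}) (\<lambda>_. borel)) (\<lambda>g. g (Inl j) \<in> real`S \<and> (\<forall>i\<in>{..<j}. \<not> g (Inl i) \<in> real`S))"
    by (intro pred_intros_logic(3) pred_intros_countable_bounded(3) pred_intros_logic(2) pred_sets2[OF Sb c]) auto
  then have m1: "f1 \<in> measurable (PiM (Inl`{..j}) (\<lambda>_. borel)) (count_space UNIV)"
    unfolding f1_def by simp
  have m2: "f2 \<in> borel_measurable (PiM (Inr`{..j}) (\<lambda>_. borel))"
    unfolding f2_def
    by (intro borel_measurable_sum) (use measurable_component_singleton[of "Inr i" "Inr`{..j}" "\<lambda>_. borel" for i] in auto)
  have m1': "(\<lambda>g. if f1 g then 1 else 0::real) \<in> borel_measurable (PiM (Inl`{..j}) (\<lambda>_. borel))"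
    using m1 by (intro measurable_If) auto
  have IV2: "indep_var borel ((\<lambda>g. if f1 g then 1 else 0::real) \<circ> (\<lambda>\<omega>. restrict (\<lambda>k. XX k \<omega>) (Inl`{..j}))) borel (f2 \<circ> (\<lambda>\<omega>. restrict (\<lambda>k. XX k \<omega>) (Inr`{..j})))"
    apply (rule indep_var_compose[OF IV])
    using m1' m2 by auto
  have "prob ((\<lambda>x. (((\<lambda>g. if f1 g then 1 else 0::real) \<circ> (\<lambda>\<omega>. restrict (\<lambda>k. XX k \<omega>) (Inl`{..j}))) x, (f2 \<circ> (\<lambda>\<omega>. restrict (\<lambda>k. XX k \<omega>) (Inr`{..j}))) x)) -` ({1} \<times> {t<..}) \<inter> space M)
    = prob (((\<lambda>g. if f1 g then 1 else 0::real) \<circ> (\<lambda>\<omega>. restrict (\<lambda>k. XX k \<omega>) (Inl`{..j}))) -` {1} \<inter> space M) * prob ((f2 \<circ> (\<lambda>\<omega>. restrict (\<lambda>k. XX k \<omega>) (Inr`{..j}))) -` {t<..} \<inter> space M)"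
    by (rule indep_varD[OF IV2]) auto
  moreover have "(\<lambda>x. (((\<lambda>g. if f1 g then 1 else 0::real) \<circ> (\<lambda>\<omega>. restrict (\<lambda>k. XX k \<omega>) (Inl`{..j}))) x, (f2 \<circ> (\<lambda>\<omega>. restrict (\<lambda>k. XX k \<omega>) (Inr`{..j}))) x)) -` ({1} \<times> {t<..}) \<inter> space M
    = {\<omega>\<in>space M. (Y j \<omega> \<in> S \<and> (\<forall>i<j. Y i \<omega> \<notin> S)) \<and> t < arrival E j \<omega>}"
    by (auto simp: f1_def f2_def XX_def arrival_def image_iff Ball_def split: if_splits; metis le_neq_implies_less)
  moreover have "((\<lambda>g. if f1 g then 1 else 0::real) \<circ> (\<lambda>\<omega>. restrict (\<lambda>k. XX k \<omega>) (Inl`{..j}))) -` {1} \<inter> space M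
     = {\<omega>\<in>space M. \<forall>i\<in>{..j}. Y i \<omega> \<in> (if i = j then S else - S)}"
    by (auto simp: f1_def XX_def image_iff Ball_def split: if_splits; metis le_neq_implies_less)
  moreover have "(f2 \<circ> (\<lambda>\<omega>. restrict (\<lambda>k. XX k \<omega>) (Inr`{..j}))) -` {t<..} \<inter> space M
     = {\<omega>\<in>space M. t < arrival E j \<omega>}"
    by (auto simp: f2_def XX_def arrival_def)
  moreover have "prob {\<omega>\<in>space M. \<forall>i\<in>{..j}. Y i \<omega> \<in> (if i = j then S else - S)} = (1 - sum p S) ^ j * sum p S"
  proof -
    have pc: "prob {\<omega>\<in>space M. Y i \<omega> \<notin> S} = 1 - sum p S" for i
    proof -
      have "{\<omega>\<in>space M. Y i \<omega> \<notin> S} = space M - {\<omega>\<in>space M. Y i \<omega> \<in> S}" by auto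
      then show ?thesis using prob_Y_in[OF assms(2,3)] by (simp add: prob_compl)
    qed
    have "prob {\<omega>\<in>space M. \<forall>i\<in>{..j}. Y i \<omega> \<in> (if i = j then S else - S)} = (\<Prod>i\<in>{..j}. prob {\<omega>\<in>space M. Y i \<omega> \<in> (if i = j then S else - S)})"
      by (rule prob_Y_indep) auto
    also have "\<dots> = (\<Prod>i\<in>{..<j}. prob {\<omega>\<in>space M. Y i \<omega> \<in> (if i = j then S else - S)}) * prob {\<omega>\<in>space M. Y j \<omega> \<in> S}"
      by (simp add: lessThan_Suc_atMost[symmetric])
    also have "\<dots> = (\<Prod>i\<in>{..<j}. 1 - sum p S) * sum p S"
      by (intro arg_cong2[where f="(*)"] prod.cong) (auto simp: pc prob_Y_in[OF assms(2,3)])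
    finally show ?thesis by simp
  qed
  ultimately show ?thesis using arrival_dist[OF assms(1)] by simp
qed

end

lemma series_id:
  fixes q t :: real
  assumes "0 < q" "q \<le> 1" "0 \<le> t"
  shows "(\<lambda>j. (1-q)^j * q * (\<Sum>k\<le>j. t^k * exp(-t) / fact k)) sums exp(- t * q)"
proof -
  define P where "P k = t^k * exp(-t) / fact k" for k :: nat
  have id: "(\<Sum>j<m. (1-q)^j * q * (\<Sum>k\<le>j. P k)) = (\<Sum>k<m. (1-q)^k * P k) - (1-q)^m * (\<Sum>k<m. P k)" for m
  proof (induction m)
    case 0 then show ?case by simp
  next
    case (Suc m)
    have "(\<Sum>k\<le>m. P k) = (\<Sum>k<m. P k) + P m" by (simp add: lessThan_Suc_atMost[symmetric])
    then show ?case using Suc by (simp add: algebra_simps)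
  qed
  have e1: "(\<lambda>m. \<Sum>k<m. (t*(1-q))^k / fact k) \<longlonglongrightarrow> exp (t*(1-q))"
    using exp_converges[of "t*(1-q)"] unfolding sums_def by (simp add: divide_inverse mult.commute)
  have e2: "(\<lambda>m. \<Sum>k<m. t^k / fact k) \<longlonglongrightarrow> exp t"
    using exp_converges[of "t"] unfolding sums_def by (simp add: divide_inverse mult.commute)
  have a: "(\<Sum>k<m. (1-q)^k * P k) = exp(-t) * (\<Sum>k<m. (t*(1-q))^k / fact k)" for m
    unfolding P_def sum_distrib_left by (intro sum.cong refl) (simp add: power_mult_distrib)
  have b: "(\<Sum>k<m. P k) = exp(-t) * (\<Sum>k<m. t^k / fact k)" for m
    by (simp add: P_def sum_distrib_left algebra_simps)
  have w: "(\<lambda>m. (1-q)^m) \<longlonglongrightarrow> 0"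
    by (rule LIMSEQ_power_zero) (use assms in auto)
  have "(\<lambda>m. exp(-t) * (\<Sum>k<m. (t*(1-q))^k / fact k) - (1-q)^m * (exp(-t) * (\<Sum>k<m. t^k / fact k)))
        \<longlonglongrightarrow> exp(-t) * exp (t*(1-q)) - 0 * (exp(-t) * exp t)"
    by (intro tendsto_intros e1 e2 w)
  moreover have "exp(-t) * exp (t*(1-q)) - 0 * (exp(-t) * exp t) = exp(-t*q)"
    by (simp add: exp_add[symmetric] algebra_simps)
  ultimately show ?thesis
    unfolding sums_def P_def[symmetric] id a b by simp
qed

context kset begin

lemma sumpS_le1:
  assumes "finite S" "S \<subseteq> {1..}"
  shows "sum p S \<le> 1"
  using prob_Y_in[OF assms, of 0] prob_le_1[of "{\<omega> \<in> space M. Y 0 \<omega> \<in> S}"] by simp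

lemma sumpS_pos:
  assumes "finite S" "S \<subseteq> {1..}" "S \<noteq> {}"
  shows "0 < sum p S"
  using assms ppos by (intro sum_pos) auto

lemma AE_hit_S:
  assumes "finite S" "S \<subseteq> {1..}" "S \<noteq> {}"
  shows "AE \<omega> in M. \<exists>i. Y i \<omega> \<in> S"
proof -
  let ?N = "{\<omega> \<in> space M. \<forall>i. Y i \<omega> \<notin> S}"
  have Nm: "?N \<in> events" by measurable
  define q where "q = sum p S"
  have q: "0 < q" "q \<le> 1" using sumpS_le1[OF assms(1,2)] sumpS_pos[OF assms] by (auto simp: q_def)
  have le: "prob ?N \<le> (1 - q) ^ Suc m" for m
  proof -
    have "prob ?N \<le> prob {\<omega>\<in>space M. \<forall>i\<in>{..<Suc m}. Y i \<omega> \<in> - S}"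
      by (intro finite_measure_mono) auto
    also have "\<dots> = (\<Prod>i\<in>{..<Suc m}. prob {\<omega>\<in>space M. Y i \<omega> \<in> - S})"
      by (rule prob_Y_indep) auto
    also have "\<dots> = (\<Prod>i\<in>{..<Suc m}. 1 - q)"
    proof (intro prod.cong refl)
      fix i
      have "{\<omega>\<in>space M. Y i \<omega> \<in> - S} = space M - {\<omega>\<in>space M. Y i \<omega> \<in> S}" by auto
      then show "prob {\<omega>\<in>space M. Y i \<omega> \<in> - S} = 1 - q"
        using prob_Y_in[OF assms(1,2)] by (simp add: prob_compl q_def)
    qed
    finally show ?thesis by simp
  qed
  have "(\<lambda>m. (1-q) ^ Suc m) \<longlonglongrightarrow> 0"
    by (rule LIMSEQ_power_zero[THEN LIMSEQ_Suc]) (use q in auto)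
  then have "prob ?N \<le> 0"
    using le by (intro LIMSEQ_le_const[of _ 0]) auto
  then have "prob ?N = 0" using measure_nonneg[of M ?N] by linarith
  then show ?thesis
    by (subst AE_iff_measurable[where N="?N"]) (auto simp: emeasure_eq_measure)
qed

lemma KL:
  assumes "0 \<le> t" "finite S" "S \<subseteq> {1..}"
  shows "prob {\<omega>\<in>space M. \<forall>i. Y i \<omega> \<in> S \<longrightarrow> t < arrival E i \<omega>} = exp (- t * sum p S)"
proof (cases "S = {}")
  case True then show ?thesis by (simp add: prob_space)
next
  case False
  define q where "q = sum p S"
  have q: "0 < q" "q \<le> 1" using sumpS_le1[OF assms(2,3)] sumpS_pos[OF assms(2,3) False] by (auto simp: q_def)
  define D where "D j = {\<omega>\<in>space M. (Y j \<omega> \<in> S \<and> (\<forall>i<j. Y i \<omega> \<notin> S)) \<and> t < arrival E j \<omega>}" for j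
  have Dm: "range D \<subseteq> events" unfolding D_def by auto
  have disj: "disjoint_family D"
    unfolding disjoint_family_on_def D_def by (auto dest: not_less_iff_gr_or_eq[THEN iffD1])
  have s1: "(\<lambda>j. prob (D j)) sums prob (\<Union>j. D j)"
    by (rule finite_measure_UNION[OF Dm disj])
  have pD: "prob (D j) = (1-q)^j * q * (\<Sum>k\<le>j. t^k * exp(-t) / fact k)" for j
    unfolding D_def q_def by (rule prob_first_hit[OF assms])
  have "AE \<omega> in M. \<omega> \<in> {\<omega>\<in>space M. \<forall>i. Y i \<omega> \<in> S \<longrightarrow> t < arrival E i \<omega>} \<longleftrightarrow> \<omega> \<in> (\<Union>j. D j)"
    using AE_hit_S[OF assms(2,3) False] E_pos
  proof eventually_elim
    case (elim \<omega>)
    show ?case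
    proof
      assume a: "\<omega> \<in> {\<omega>\<in>space M. \<forall>i. Y i \<omega> \<in> S \<longrightarrow> t < arrival E i \<omega>}"
      define j where "j = (LEAST i. Y i \<omega> \<in> S)"
      have "Y j \<omega> \<in> S" unfolding j_def using elim(1) by (metis LeastI)
      moreover have "\<forall>i<j. Y i \<omega> \<notin> S" unfolding j_def using not_less_Least by blast
      ultimately have "\<omega> \<in> D j" using a unfolding D_def by auto
      then show "\<omega> \<in> (\<Union>j. D j)" by auto
    next
      assume "\<omega> \<in> (\<Union>j. D j)"
      then obtain j where j: "\<omega> \<in> D j" by auto
      have "t < arrival E i \<omega>" if "Y i \<omega> \<in> S" for i
      proof -
        have "j \<le> i" using j that unfolding D_def by (auto simp: not_less[symmetric])
        then have "arrival E j \<omega> \<le> arrival E i \<omega>" by (rule arrival_mono[OF elim(2)])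
        then show ?thesis using j unfolding D_def by auto
      qed
      then show "\<omega> \<in> {\<omega>\<in>space M. \<forall>i. Y i \<omega> \<in> S \<longrightarrow> t < arrival E i \<omega>}"
        using j unfolding D_def by auto
    qed
  qed
  then have "prob {\<omega>\<in>space M. \<forall>i. Y i \<omega> \<in> S \<longrightarrow> t < arrival E i \<omega>} = prob (\<Union>j. D j)"
    by (rule measure_eq_AE) (use Dm in auto)
  moreover have "(\<lambda>j. prob (D j)) sums exp (- t * q)"
    unfolding pD by (rule series_id[OF q assms(1)])
  ultimately show ?thesis using s1 sums_unique2 q_def by metis
qed

end

context kset begin

definition hit :: "real \<Rightarrow> nat \<Rightarrow> 'a \<Rightarrow> bool" where
  "hit t l \<omega> = (\<exists>i. Y i \<omega> = l \<and> arrival E i \<omega> \<le> t)"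

definition Zl :: "real \<Rightarrow> nat \<Rightarrow> 'a \<Rightarrow> real" where
  "Zl t l \<omega> = (if hit t l \<omega> then 0 else 1)"

lemma hit_meas[measurable]: "Measurable.pred M (hit t l)"
  unfolding hit_def[abs_def] by measurable

lemma Zl_meas[measurable]: "Zl t l \<in> borel_measurable M"
  unfolding Zl_def[abs_def] by measurable

lemma KL':
  assumes "0 \<le> t" "finite S" "S \<subseteq> {1..}"
  shows "prob {\<omega>\<in>space M. \<forall>l\<in>S. \<not> hit t l \<omega>} = (\<Prod>l\<in>S. exp (- t * p l))"
proof -
  have "{\<omega>\<in>space M. \<forall>l\<in>S. \<not> hit t l \<omega>} = {\<omega>\<in>space M. \<forall>i. Y i \<omega> \<in> S \<longrightarrow> t < arrival E i \<omega>}"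
    by (auto simp: hit_def not_le)
  then show ?thesis using KL[OF assms] by (simp add: exp_sum[OF assms(2), symmetric] sum_distrib_left sum_negf)
qed

lemma prod_Zl: "(\<Prod>l\<in>S. Zl t l \<omega>) = (if \<forall>l\<in>S. \<not> hit t l \<omega> then 1 else 0)" if "finite S"
  using that by (induction S rule: finite_induct) (auto simp: Zl_def)

lemma FL:
  assumes "0 \<le> t" "finite F" "F \<subseteq> {1..}"
  shows "integral\<^sup>L M (\<lambda>\<omega>. \<Prod>l\<in>F. a l + b l * Zl t l \<omega>) = (\<Prod>l\<in>F. a l + b l * exp (- t * p l))"
proof -
  define G where "G S = {\<omega>\<in>space M. \<forall>l\<in>S. \<not> hit t l \<omega>}" for S
  have Gm: "G S \<in> events" for S unfolding G_def by measurable
  have Gi: "integrable M (indicat_real (G S))" for S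
    using Gm[of S] by (intro integrable_real_indicator) (auto simp: emeasure_eq_measure)
  have e: "(\<Prod>l\<in>F. a l + b l * Zl t l \<omega>) = (\<Sum>S\<in>Pow F. ((\<Prod>l\<in>S. b l) * (\<Prod>l\<in>F-S. a l)) * indicator (G S) \<omega>)"
    if "\<omega> \<in> space M" for \<omega>
  proof -
    have "(\<Prod>l\<in>F. a l + b l * Zl t l \<omega>) = (\<Prod>l\<in>F. b l * Zl t l \<omega> + a l)" by (simp add: add.commute)
    also have "\<dots> = (\<Sum>S\<in>Pow F. (\<Prod>l\<in>S. b l * Zl t l \<omega>) * (\<Prod>l\<in>F-S. a l))"
      by (rule prod_add[OF assms(2)])
    also have "\<dots> = (\<Sum>S\<in>Pow F. ((\<Prod>l\<in>S. b l) * (\<Prod>l\<in>F-S. a l)) * indicator (G S) \<omega>)"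
    proof (intro sum.cong refl)
      fix S assume "S \<in> Pow F"
      then have "finite S" using assms(2) finite_subset by auto
      then show "(\<Prod>l\<in>S. b l * Zl t l \<omega>) * (\<Prod>l\<in>F-S. a l) = ((\<Prod>l\<in>S. b l) * (\<Prod>l\<in>F-S. a l)) * indicator (G S) \<omega>"
        using that by (simp add: prod.distrib prod_Zl G_def indicator_def)
    qed
    finally show ?thesis .
  qed
  have "integral\<^sup>L M (\<lambda>\<omega>. \<Prod>l\<in>F. a l + b l * Zl t l \<omega>) = integral\<^sup>L M (\<lambda>\<omega>. \<Sum>S\<in>Pow F. ((\<Prod>l\<in>S. b l) * (\<Prod>l\<in>F-S. a l)) * indicator (G S) \<omega>)"
    by (rule Bochner_Integration.integral_cong[OF refl]) (rule e)
  also have "\<dots> = (\<Sum>S\<in>Pow F. ((\<Prod>l\<in>S. b l) * (\<Prod>l\<in>F-S. a l)) * prob (G S))"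
    by (subst Bochner_Integration.integral_sum) (auto simp: Gm Gi)
  also have "\<dots> = (\<Sum>S\<in>Pow F. (\<Prod>l\<in>S. b l * exp (- t * p l)) * (\<Prod>l\<in>F-S. a l))"
  proof (intro sum.cong refl)
    fix S assume "S \<in> Pow F"
    then have "finite S" "S \<subseteq> {1..}" using assms(2,3) finite_subset by auto
    then show "((\<Prod>l\<in>S. b l) * (\<Prod>l\<in>F-S. a l)) * prob (G S) = (\<Prod>l\<in>S. b l * exp (- t * p l)) * (\<Prod>l\<in>F-S. a l)"
      unfolding G_def using KL'[OF assms(1)] by (simp add: prod.distrib)
  qed
  also have "\<dots> = (\<Prod>l\<in>F. b l * exp (- t * p l) + a l)"
    by (rule prod_add[OF assms(2), symmetric])
  finally show ?thesis by (simp add: add.commute)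
qed

end

context kset begin

definition Hs :: "real \<Rightarrow> 'a \<Rightarrow> nat set" where
  "Hs t \<omega> = {l. 1 \<le> l \<and> hit t l \<omega>}"

lemma Ktil_eq: "Ktil Y E t \<omega> = card (Hs t \<omega>)"
proof -
  have "Ktil_l Y E t l \<omega> \<noteq> 0 \<longleftrightarrow> hit t l \<omega>" for l
    by (simp add: Ktil_l_def hit_def suminf_eq_zero_iff)
  then show ?thesis unfolding Ktil_def Hs_def by simp
qed

definition KF :: "real \<Rightarrow> nat \<Rightarrow> 'a \<Rightarrow> real" where
  "KF t L \<omega> = (\<Sum>l\<in>{1..L}. 1 - Zl t l \<omega>)"

lemma KF_meas[measurable]: "KF t L \<in> borel_measurable M"
  unfolding KF_def[abs_def] by measurable

lemma KF_card: "KF t L \<omega> = real (card {l\<in>{1..L}. hit t l \<omega>})"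
proof -
  have "KF t L \<omega> = (\<Sum>l\<in>{1..L}. if hit t l \<omega> then 1 else 0)"
    unfolding KF_def Zl_def by (intro sum.cong) auto
  also have "\<dots> = (\<Sum>l\<in>{l\<in>{1..L}. hit t l \<omega>}. 1)"
    by (subst sum.inter_filter) auto
  finally show ?thesis by simp
qed

definition good :: "'a \<Rightarrow> bool" where
  "good \<omega> \<longleftrightarrow> (\<forall>j. 0 < E j \<omega>) \<and> (\<forall>n::nat. \<exists>m. real n < arrival E m \<omega>)"

lemma AE_good: "AE \<omega> in M. good \<omega>"
  using E_pos arrival_unbounded unfolding good_def by auto

lemma good_finite:
  assumes "good \<omega>"
  shows "finite (Hs t \<omega>)"
proof -
  obtain n :: nat where n: "t \<le> real n" using real_arch_simple by blast
  obtain m where m: "real n < arrival E m \<omega>" using assms unfolding good_def by blast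
  have "Hs t \<omega> \<subseteq> (\<lambda>i. Y i \<omega>) ` {..<m}"
  proof
    fix l assume "l \<in> Hs t \<omega>"
    then obtain i where i: "Y i \<omega> = l" "arrival E i \<omega> \<le> t" unfolding Hs_def hit_def by auto
    have "i < m"
    proof (rule ccontr)
      assume "\<not> i < m"
      then have "arrival E m \<omega> \<le> arrival E i \<omega>"
        using assms unfolding good_def by (intro arrival_mono) auto
      then show False using i n m by linarith
    qed
    then show "l \<in> (\<lambda>i. Y i \<omega>) ` {..<m}" using i by auto
  qed
  then show ?thesis by (rule finite_subset) auto
qed

lemma KF_eventually:
  assumes "finite (Hs t \<omega>)" "Max (insert 0 (Hs t \<omega>)) \<le> L"
  shows "KF t L \<omega> = real (card (Hs t \<omega>))"
proof -
  have "{l\<in>{1..L}. hit t l \<omega>} = Hs t \<omega>"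
  proof
    show "Hs t \<omega> \<subseteq> {l\<in>{1..L}. hit t l \<omega>}"
    proof
      fix l assume l: "l \<in> Hs t \<omega>"
      then have "l \<le> Max (insert 0 (Hs t \<omega>))" using assms(1) by (intro Max_ge) auto
      then show "l \<in> {l\<in>{1..L}. hit t l \<omega>}" using l assms(2) unfolding Hs_def by auto
    qed
  qed (auto simp: Hs_def)
  then show ?thesis by (simp add: KF_card)
qed

lemma KF_le:
  assumes "finite (Hs t \<omega>)"
  shows "KF t L \<omega> \<le> real (card (Hs t \<omega>))"
  unfolding KF_card using assms by (intro of_nat_mono card_mono) (auto simp: Hs_def)

lemma KF_mono: "L \<le> L' \<Longrightarrow> KF t L \<omega> \<le> KF t L' \<omega>"
  unfolding KF_def by (intro sum_mono2) (auto simp: Zl_def)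

lemma KF_lim:
  assumes "finite (Hs t \<omega>)"
  shows "(\<lambda>L. KF t L \<omega>) \<longlonglongrightarrow> real (card (Hs t \<omega>))"
  by (rule tendsto_eventually) (use KF_eventually[OF assms] in \<open>auto simp: eventually_sequentially\<close>)

lemma Kr_meas[measurable]: "(\<lambda>\<omega>. real (Ktil Y E t \<omega>)) \<in> borel_measurable M"
proof -
  have eq: "real (Ktil Y E t \<omega>) = (if (\<exists>m. \<forall>n. (1 \<le> n \<and> hit t n \<omega>) \<longrightarrow> n < m) then lim (\<lambda>L. KF t L \<omega>) else 0)" for \<omega>
  proof -
    have fin: "finite (Hs t \<omega>) \<longleftrightarrow> (\<exists>m. \<forall>n. (1 \<le> n \<and> hit t n \<omega>) \<longrightarrow> n < m)"
      unfolding finite_nat_set_iff_bounded Hs_def by auto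
    show ?thesis
    proof (cases "finite (Hs t \<omega>)")
      case True
      then show ?thesis using fin limI[OF KF_lim[OF True]] by (simp add: Ktil_eq)
    next
      case False
      then have "\<not> (\<exists>m. \<forall>n. (1 \<le> n \<and> hit t n \<omega>) \<longrightarrow> n < m)" using fin by blast
      then show ?thesis using False by (subst if_not_P) (auto simp: Ktil_eq)
    qed
  qed
  show ?thesis unfolding eq by measurable
qed

end

context kset begin

definition pii :: "real \<Rightarrow> nat \<Rightarrow> real" where
  "pii t l = 1 - exp (- t * p l)"

definition PhiF :: "real \<Rightarrow> nat \<Rightarrow> real" where
  "PhiF t L = (\<Sum>l\<in>{1..L}. pii t l)"

definition Phis :: "real \<Rightarrow> real" where
  "Phis t = (\<Sum>l. pii t (Suc l))"

lemma p_pos: "1 \<le> l \<Longrightarrow> 0 < p l" using ppos by auto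

lemma pii_nonneg: "0 \<le> t \<Longrightarrow> 1 \<le> l \<Longrightarrow> 0 \<le> pii t l"
  unfolding pii_def using p_pos[of l] by (simp add: mult_nonneg_nonneg less_imp_le)

lemma pii_le1: "pii t l \<le> 1"
  unfolding pii_def by simp

lemma pii_le: "pii t l \<le> t * p l"
  unfolding pii_def using exp_ge_add_one_self[of "- t * p l"] by simp

lemma summable_pii: "0 \<le> t \<Longrightarrow> summable (\<lambda>l. pii t (Suc l))"
proof (rule summable_comparison_test)
  assume t: "0 \<le> t"
  show "\<exists>N. \<forall>n\<ge>N. norm (pii t (Suc n)) \<le> t * p (Suc n)"
    using pii_le pii_nonneg[OF t] by auto
  show "summable (\<lambda>n. t * p (Suc n))"
    using psum by (intro summable_mult) (simp add: sums_summable)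
qed

lemma PhiF_shift: "PhiF t L = (\<Sum>l<L. pii t (Suc l))"
  unfolding PhiF_def by (induction L) (auto simp: atLeastAtMostSuc_conv)

lemma PhiF_lim: "0 \<le> t \<Longrightarrow> (\<lambda>L. PhiF t L) \<longlonglongrightarrow> Phis t"
  unfolding PhiF_shift Phis_def using summable_pii
  by (simp add: summable_LIMSEQ)

lemma PhiF_nonneg: "0 \<le> t \<Longrightarrow> 0 \<le> PhiF t L"
  unfolding PhiF_def by (intro sum_nonneg pii_nonneg) auto

lemma PhiF_le_Phis: "0 \<le> t \<Longrightarrow> PhiF t L \<le> Phis t"
  unfolding PhiF_shift Phis_def using summable_pii pii_nonneg
  by (intro sum_le_suminf) auto

lemma Phis_nonneg: "0 \<le> t \<Longrightarrow> 0 \<le> Phis t"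
  using PhiF_le_Phis[of t 0] by (simp add: PhiF_def)

lemma Zl_01: "Zl t l \<omega> = 0 \<or> Zl t l \<omega> = 1"
  unfolding Zl_def by auto

lemma int_bounded:
  fixes f :: "'a \<Rightarrow> real" and B :: real
  assumes "f \<in> borel_measurable M" "\<And>\<omega>. \<bar>f \<omega>\<bar> \<le> B"
  shows "integrable M f"
  using assms by (intro integrable_const_bound[where B=B]) auto

lemma KF_int: "0 \<le> t \<Longrightarrow> integral\<^sup>L M (KF t L) = PhiF t L"
proof -
  assume t: "0 \<le> t"
  have "integral\<^sup>L M (KF t L) = (\<Sum>l\<in>{1..L}. integral\<^sup>L M (\<lambda>\<omega>. 1 - Zl t l \<omega>))"
    unfolding KF_def
    by (rule Bochner_Integration.integral_sum) (auto intro!: int_bounded[where B=1] simp: Zl_def)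
  also have "\<dots> = (\<Sum>l\<in>{1..L}. pii t l)"
  proof (intro sum.cong refl)
    fix l assume l: "l \<in> {1..L}"
    have "integral\<^sup>L M (\<lambda>\<omega>. \<Prod>l\<in>{l}. 1 + (-1) * Zl t l \<omega>) = (\<Prod>l\<in>{l}. 1 + (-1) * exp (- t * p l))"
      by (rule FL[OF t]) (use l in auto)
    then show "integral\<^sup>L M (\<lambda>\<omega>. 1 - Zl t l \<omega>) = pii t l" by (simp add: pii_def)
  qed
  finally show ?thesis unfolding PhiF_def .
qed

lemma KF_var: "0 \<le> t \<Longrightarrow> integral\<^sup>L M (\<lambda>\<omega>. (KF t L \<omega> - PhiF t L)^2) \<le> PhiF t L"
proof -
  assume t: "0 \<le> t"
  define r where "r l = exp (- t * p l)" for l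
  define F where "F = {1..L}"
  have Fs: "finite F" "F \<subseteq> {1..}" unfolding F_def by auto
  have d: "KF t L \<omega> - PhiF t L = (\<Sum>l\<in>F. r l - Zl t l \<omega>)" for \<omega>
    unfolding KF_def PhiF_def pii_def r_def F_def sum_subtractf[symmetric] by (intro sum.cong) auto
  have sq: "(KF t L \<omega> - PhiF t L)^2 = (\<Sum>l\<in>F. \<Sum>m\<in>F. (r l - Zl t l \<omega>) * (r m - Zl t m \<omega>))" for \<omega>
    unfolding d power2_eq_square sum_product ..
  have ib: "integrable M (\<lambda>\<omega>. (r l - Zl t l \<omega>) * (r m - Zl t m \<omega>))" if lm: "l \<in> F" "m \<in> F" for l m
  proof (rule int_bounded[where B=1])
    fix \<omega>
    have "1 \<le> l" "1 \<le> m" using lm Fs by auto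
    then have "0 \<le> t * p l" "0 \<le> t * p m"
      using p_pos[of l] p_pos[of m] t by (metis less_imp_le mult_nonneg_nonneg)+
    then have "0 \<le> r l" "r l \<le> 1" "0 \<le> r m" "r m \<le> 1"
      unfolding r_def by auto
    then show "\<bar>(r l - Zl t l \<omega>) * (r m - Zl t m \<omega>)\<bar> \<le> 1"
      using Zl_01[of t l \<omega>] Zl_01[of t m \<omega>] by (auto simp: abs_mult intro!: mult_le_one)
  qed simp
  have c: "integral\<^sup>L M (\<lambda>\<omega>. (r l - Zl t l \<omega>) * (r m - Zl t m \<omega>)) = (if l = m then r l - (r l)^2 else 0)"
    if lm: "l \<in> F" "m \<in> F" for l m
  proof (cases "l = m")
    case True
    have e: "(r l - Zl t l \<omega>) * (r l - Zl t l \<omega>) = (\<Prod>k\<in>{l}. (r l)^2 + (1 - 2 * r l) * Zl t k \<omega>)" for \<omega>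
      using Zl_01[of t l \<omega>] by (auto simp: power2_eq_square algebra_simps)
    have "integral\<^sup>L M (\<lambda>\<omega>. \<Prod>k\<in>{l}. (r l)^2 + (1 - 2 * r l) * Zl t k \<omega>) = (\<Prod>k\<in>{l}. (r l)^2 + (1 - 2 * r l) * exp (- t * p k))"
      by (rule FL[OF t]) (use lm Fs in auto)
    moreover have "(\<lambda>\<omega>. (r l - Zl t l \<omega>) * (r m - Zl t m \<omega>)) = (\<lambda>\<omega>. \<Prod>k\<in>{l}. (r l)^2 + (1 - 2 * r l) * Zl t k \<omega>)"
      using True e by simp
    ultimately show ?thesis using True by (simp add: r_def power2_eq_square algebra_simps)
  next
    case False
    have e: "(r l - Zl t l \<omega>) * (r m - Zl t m \<omega>) = (\<Prod>k\<in>{l,m}. r k + (-1) * Zl t k \<omega>)" for \<omega>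
      using False by simp
    have "integral\<^sup>L M (\<lambda>\<omega>. \<Prod>k\<in>{l,m}. r k + (-1) * Zl t k \<omega>) = (\<Prod>k\<in>{l,m}. r k + (-1) * exp (- t * p k))"
      by (rule FL[OF t]) (use lm Fs in auto)
    then show ?thesis using False unfolding e by (simp add: r_def)
  qed
  have "integral\<^sup>L M (\<lambda>\<omega>. (KF t L \<omega> - PhiF t L)^2) = (\<Sum>l\<in>F. \<Sum>m\<in>F. integral\<^sup>L M (\<lambda>\<omega>. (r l - Zl t l \<omega>) * (r m - Zl t m \<omega>)))"
    unfolding sq
  proof (subst Bochner_Integration.integral_sum)
    show "integrable M (\<lambda>\<omega>. \<Sum>m\<in>F. (r l - Zl t l \<omega>) * (r m - Zl t m \<omega>))" if "l \<in> F" for l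
      using ib that by (intro Bochner_Integration.integrable_sum) auto
    show "(\<Sum>l\<in>F. integral\<^sup>L M (\<lambda>\<omega>. \<Sum>m\<in>F. (r l - Zl t l \<omega>) * (r m - Zl t m \<omega>))) =
      (\<Sum>l\<in>F. \<Sum>m\<in>F. integral\<^sup>L M (\<lambda>\<omega>. (r l - Zl t l \<omega>) * (r m - Zl t m \<omega>)))"
      using ib by (intro sum.cong refl Bochner_Integration.integral_sum) auto
  qed
  also have "\<dots> = (\<Sum>l\<in>F. r l - (r l)^2)"
    using c Fs by (simp add: sum.delta)
  also have "\<dots> \<le> (\<Sum>l\<in>F. pii t l)"
  proof (intro sum_mono)
    fix l
    have "0 \<le> (1 - r l) * (1 - r l)" by simp
    then show "r l - (r l)^2 \<le> pii t l"
      unfolding pii_def r_def[symmetric] power2_eq_square by (simp add: algebra_simps)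
  qed
  finally show ?thesis unfolding PhiF_def F_def .
qed

lemma KF_expmom: "0 \<le> t \<Longrightarrow> integral\<^sup>L M (\<lambda>\<omega>. exp (- KF t L \<omega>)) \<le> exp (- (1 - exp (-1)) * PhiF t L)"
proof -
  assume t: "0 \<le> t"
  define F where "F = {1..L}"
  have Fs: "finite F" "F \<subseteq> {1..}" unfolding F_def by auto
  have e: "exp (- KF t L \<omega>) = (\<Prod>l\<in>F. exp (-1) + (1 - exp (-1)) * Zl t l \<omega>)" for \<omega>
  proof -
    have "- KF t L \<omega> = (\<Sum>l\<in>F. - (1 - Zl t l \<omega>))"
      by (simp only: KF_def F_def sum_negf)
    then have "exp (- KF t L \<omega>) = (\<Prod>l\<in>F. exp (- (1 - Zl t l \<omega>)))"
      by (simp add: exp_sum[OF Fs(1)])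
    also have "\<dots> = (\<Prod>l\<in>F. exp (-1) + (1 - exp (-1)) * Zl t l \<omega>)"
      by (intro prod.cong refl) (auto simp: Zl_def)
    finally show ?thesis .
  qed
  have "integral\<^sup>L M (\<lambda>\<omega>. exp (- KF t L \<omega>)) = (\<Prod>l\<in>F. exp (-1) + (1 - exp (-1)) * exp (- t * p l))"
    unfolding e by (rule FL[OF t Fs])
  also have "\<dots> \<le> (\<Prod>l\<in>F. exp (- (1 - exp (-1)) * pii t l))"
  proof (intro prod_mono conjI)
    fix l assume "l \<in> F"
    have "exp (-1::real) \<le> 1" by simp
    then show "0 \<le> exp (-1) + (1 - exp (-1)) * exp (- t * p l)" by (intro add_nonneg_nonneg mult_nonneg_nonneg) auto
    have "exp (-1) + (1 - exp (-1)) * exp (- t * p l) = 1 + (- (1 - exp (-1)) * pii t l)"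
      unfolding pii_def by (simp add: algebra_simps)
    also have "\<dots> \<le> exp (- (1 - exp (-1)) * pii t l)" by (rule exp_ge_add_one_self)
    finally show "exp (-1) + (1 - exp (-1)) * exp (- t * p l) \<le> exp (- (1 - exp (-1)) * pii t l)" .
  qed
  also have "\<dots> = exp (- (1 - exp (-1)) * PhiF t L)"
    unfolding PhiF_def F_def by (simp add: exp_sum[symmetric] sum_distrib_left)
  finally show ?thesis .
qed

end

context kset begin

lemma KF_le_Kr: "AE \<omega> in M. KF t L \<omega> \<le> real (Ktil Y E t \<omega>)"
  using AE_good by eventually_elim (simp add: Ktil_eq KF_le good_finite)

lemma KF_nonneg: "0 \<le> KF t L \<omega>"
  unfolding KF_card by simp

lemma KF_leL: "KF t L \<omega> \<le> real L"
proof -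
  have "card {l\<in>{1..L}. hit t l \<omega>} \<le> card {1..L}" by (intro card_mono) auto
  then show ?thesis unfolding KF_card by simp
qed

lemma Kr_int:
  assumes t: "0 \<le> t"
  shows "integrable M (\<lambda>\<omega>. real (Ktil Y E t \<omega>))" "integral\<^sup>L M (\<lambda>\<omega>. real (Ktil Y E t \<omega>)) = Phis t"
proof -
  have f: "integrable M (KF t L)" for L
    by (rule int_bounded[where B="real L"]) (use KF_nonneg KF_leL in auto)
  have mono: "AE \<omega> in M. mono (\<lambda>L. KF t L \<omega>)"
    by (auto intro!: monoI KF_mono)
  have lim: "AE \<omega> in M. (\<lambda>L. KF t L \<omega>) \<longlonglongrightarrow> real (Ktil Y E t \<omega>)"
    using AE_good by eventually_elim (simp add: Ktil_eq KF_lim good_finite)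
  have ilim: "(\<lambda>L. integral\<^sup>L M (KF t L)) \<longlonglongrightarrow> Phis t"
    using PhiF_lim[OF t] by (simp add: KF_int[OF t])
  show "integrable M (\<lambda>\<omega>. real (Ktil Y E t \<omega>))"
    by (rule integrable_monotone_convergence[OF f mono lim ilim]) simp
  show "integral\<^sup>L M (\<lambda>\<omega>. real (Ktil Y E t \<omega>)) = Phis t"
    by (rule integral_monotone_convergence[OF f mono lim ilim]) simp
qed

lemma Kr_expmom:
  assumes t: "0 \<le> t"
  shows "integral\<^sup>L M (\<lambda>\<omega>. exp (- real (Ktil Y E t \<omega>))) \<le> exp (- (1 - exp (-1)) * Phis t)"
proof -
  have i1: "integrable M (\<lambda>\<omega>. exp (- real (Ktil Y E t \<omega>)))"
    by (rule int_bounded[where B=1]) auto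
  have i2: "integrable M (\<lambda>\<omega>. exp (- KF t L \<omega>))" for L
    by (rule int_bounded[where B=1]) (use KF_nonneg in auto)
  have le: "integral\<^sup>L M (\<lambda>\<omega>. exp (- real (Ktil Y E t \<omega>))) \<le> exp (- (1 - exp (-1)) * PhiF t L)" for L
  proof -
    have "integral\<^sup>L M (\<lambda>\<omega>. exp (- real (Ktil Y E t \<omega>))) \<le> integral\<^sup>L M (\<lambda>\<omega>. exp (- KF t L \<omega>))"
      using KF_le_Kr[of t L] by (intro integral_mono_AE i1 i2) auto
    also have "\<dots> \<le> exp (- (1 - exp (-1)) * PhiF t L)" by (rule KF_expmom[OF t])
    finally show ?thesis .
  qed
  have "(\<lambda>L. exp (- (1 - exp (-1)) * PhiF t L)) \<longlonglongrightarrow> exp (- (1 - exp (-1)) * Phis t)"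
    by (intro tendsto_intros PhiF_lim[OF t])
  then show ?thesis using le by (intro LIMSEQ_le_const) auto
qed

lemma lower_tail:
  assumes t: "0 \<le> t"
  shows "prob {\<omega>\<in>space M. real (Ktil Y E t \<omega>) \<le> Phis t / 2} \<le> exp (- (1/2 - exp (-1)) * Phis t)"
proof -
  have i1: "integrable M (\<lambda>\<omega>. exp (- real (Ktil Y E t \<omega>)))"
    by (rule int_bounded[where B=1]) auto
  have "{\<omega>\<in>space M. real (Ktil Y E t \<omega>) \<le> Phis t / 2} = {\<omega>\<in>space M. exp (- (Phis t / 2)) \<le> exp (- real (Ktil Y E t \<omega>))}"
    by auto
  also have "prob \<dots> \<le> integral\<^sup>L M (\<lambda>\<omega>. exp (- real (Ktil Y E t \<omega>))) / exp (- (Phis t / 2))"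
    by (rule integral_Markov_inequality_measure[OF i1, where A="space M"]) auto
  also have "\<dots> \<le> exp (- (1 - exp (-1)) * Phis t) / exp (- (Phis t / 2))"
    by (intro divide_right_mono Kr_expmom[OF t]) auto
  also have "\<dots> = exp (- (1/2 - exp (-1)) * Phis t)"
    by (simp add: exp_diff[symmetric] algebra_simps)
  finally show ?thesis .
qed

lemma cheb:
  assumes t: "0 \<le> t" and a: "0 < a"
  shows "prob {\<omega>\<in>space M. a \<le> \<bar>real (Ktil Y E t \<omega>) - Phis t\<bar>} \<le> 4 * Phis t / a^2"
proof -
  define \<delta> where "\<delta> L = Phis t - PhiF t L" for L
  have dlim: "\<delta> \<longlonglongrightarrow> 0"
    unfolding \<delta>_def using tendsto_diff[OF tendsto_const PhiF_lim[OF t], of "Phis t"] by simp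
  have dnn: "0 \<le> \<delta> L" for L unfolding \<delta>_def using PhiF_le_Phis[OF t] by simp
  have iK: "integrable M (\<lambda>\<omega>. real (Ktil Y E t \<omega>))" by (rule Kr_int[OF t])
  have bound: "prob {\<omega>\<in>space M. a \<le> \<bar>real (Ktil Y E t \<omega>) - Phis t\<bar>} \<le> 4 * Phis t / a^2 + \<delta> L / (a/2 - \<delta> L)"
    if dL: "\<delta> L < a/2" for L
  proof -
    define B where "B = {\<omega>\<in>space M. a^2/4 \<le> (KF t L \<omega> - PhiF t L)^2}"
    define C where "C = {\<omega>\<in>space M. a/2 - \<delta> L \<le> real (Ktil Y E t \<omega>) - KF t L \<omega>}"
    have Bm: "B \<in> events" unfolding B_def by measurable
    have Cm: "C \<in> events" unfolding C_def by measurable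
    have "prob {\<omega>\<in>space M. a \<le> \<bar>real (Ktil Y E t \<omega>) - Phis t\<bar>} \<le> prob (B \<union> C)"
    proof (rule finite_measure_mono_AE)
      show "AE \<omega> in M. \<omega> \<in> {\<omega>\<in>space M. a \<le> \<bar>real (Ktil Y E t \<omega>) - Phis t\<bar>} \<longrightarrow> \<omega> \<in> B \<union> C"
        using KF_le_Kr[of t L]
      proof eventually_elim
        case (elim \<omega>)
        show ?case
        proof (intro impI, rule ccontr)
          assume A: "\<omega> \<in> {\<omega>\<in>space M. a \<le> \<bar>real (Ktil Y E t \<omega>) - Phis t\<bar>}" and nBC: "\<omega> \<notin> B \<union> C"
          have "(KF t L \<omega> - PhiF t L)^2 < (a/2)^2" using nBC A unfolding B_def by (auto simp: power_divide)
          then have b: "\<bar>KF t L \<omega> - PhiF t L\<bar> < a/2"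
            using a by (metis abs_of_pos half_gt_zero power2_abs power_less_imp_less_base abs_ge_zero)
          have c: "real (Ktil Y E t \<omega>) - KF t L \<omega> < a/2 - \<delta> L" using nBC A unfolding C_def by auto
          have b1: "KF t L \<omega> - PhiF t L < a/2" "- (a/2) < KF t L \<omega> - PhiF t L" using b unfolding abs_less_iff by linarith+
          have "real (Ktil Y E t \<omega>) - Phis t < a" "- a < real (Ktil Y E t \<omega>) - Phis t"
            using b1 c elim dL dnn[of L] unfolding \<delta>_def by linarith+
          then have "\<bar>real (Ktil Y E t \<omega>) - Phis t\<bar> < a" by (simp add: abs_less_iff)
          then show False using A by auto
        qed
      qed
    qed (use Bm Cm in auto)
    also have "\<dots> \<le> prob B + prob C" by (rule measure_Un_le) (use Bm Cm in auto)
    also have "prob B \<le> 4 * Phis t / a^2"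
    proof -
      have iB: "integrable M (\<lambda>\<omega>. (KF t L \<omega> - PhiF t L)^2)"
      proof (rule int_bounded[where B="(real L + PhiF t L)^2"])
        fix \<omega>
        have "\<bar>KF t L \<omega> - PhiF t L\<bar> \<le> real L + PhiF t L"
          using KF_nonneg[of t L \<omega>] KF_leL[of t L \<omega>] PhiF_nonneg[OF t, of L] by auto
        then show "\<bar>(KF t L \<omega> - PhiF t L)^2\<bar> \<le> (real L + PhiF t L)^2"
          by (metis abs_ge_zero abs_power2 power2_abs power_mono)
      qed simp
      have "prob B \<le> integral\<^sup>L M (\<lambda>\<omega>. (KF t L \<omega> - PhiF t L)^2) / (a^2/4)"
        unfolding B_def by (rule integral_Markov_inequality_measure[OF iB, where A="space M"]) (use a in auto)
      also have "\<dots> \<le> PhiF t L / (a^2/4)"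
        by (intro divide_right_mono KF_var[OF t]) auto
      also have "\<dots> \<le> Phis t / (a^2/4)"
        by (intro divide_right_mono PhiF_le_Phis[OF t]) auto
      finally show ?thesis by (simp add: field_simps)
    qed
    also have "prob C \<le> \<delta> L / (a/2 - \<delta> L)"
    proof -
      have iC: "integrable M (\<lambda>\<omega>. real (Ktil Y E t \<omega>) - KF t L \<omega>)"
        using iK by (intro Bochner_Integration.integrable_diff) (auto intro!: int_bounded[where B="real L"] simp: KF_nonneg KF_leL)
      have iF: "integrable M (KF t L)"
        by (rule int_bounded[where B="real L"]) (use KF_nonneg KF_leL in auto)
      have "prob C \<le> integral\<^sup>L M (\<lambda>\<omega>. real (Ktil Y E t \<omega>) - KF t L \<omega>) / (a/2 - \<delta> L)"
        unfolding C_def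
        by (rule integral_Markov_inequality_measure[OF iC, where A="space M"]) (use dL KF_le_Kr[of t L] in auto)
      also have "integral\<^sup>L M (\<lambda>\<omega>. real (Ktil Y E t \<omega>) - KF t L \<omega>) = \<delta> L"
        using iK iF by (simp add: Bochner_Integration.integral_diff Kr_int[OF t] KF_int[OF t] \<delta>_def)
      finally show ?thesis .
    qed
    finally show ?thesis by simp
  qed
  have "eventually (\<lambda>L. \<delta> L < a/2) sequentially"
    using dlim a by (intro order_tendstoD(2)) auto
  then have ev: "eventually (\<lambda>L. prob {\<omega>\<in>space M. a \<le> \<bar>real (Ktil Y E t \<omega>) - Phis t\<bar>} \<le> 4 * Phis t / a^2 + \<delta> L / (a/2 - \<delta> L)) sequentially"
    by eventually_elim (rule bound)
  have "(\<lambda>L. 4 * Phis t / a^2 + \<delta> L / (a/2 - \<delta> L)) \<longlonglongrightarrow> 4 * Phis t / a^2 + 0 / (a/2 - 0)"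
    using a by (intro tendsto_intros dlim) auto
  then show ?thesis using ev by (intro LIMSEQ_le_const) (auto simp: eventually_sequentially)
qed

end

context kset begin

lemma pii_mono: "0 \<le> t \<Longrightarrow> t \<le> t' \<Longrightarrow> 1 \<le> l \<Longrightarrow> pii t l \<le> pii t' l"
  unfolding pii_def using p_pos[of l] by (auto intro!: mult_right_mono)

lemma Phis_mono: "0 \<le> t \<Longrightarrow> t \<le> t' \<Longrightarrow> Phis t \<le> Phis t'"
  unfolding Phis_def using summable_pii pii_mono
  by (intro suminf_le) auto

lemma pii_step: "0 \<le> t \<Longrightarrow> 1 \<le> l \<Longrightarrow> pii (t + 1) l \<le> pii t l + p l"
proof -
  assume t: "0 \<le> t" and l: "1 \<le> l"
  have "pii (t + 1) l - pii t l = exp (- t * p l) * (1 - exp (- p l))"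
    unfolding pii_def by (simp add: algebra_simps exp_add[symmetric])
  also have "\<dots> \<le> 1 * (1 - exp (- p l))"
    using t p_pos[OF l] by (intro mult_right_mono) (auto intro!: mult_nonneg_nonneg less_imp_le)
  also have "\<dots> \<le> p l" using exp_ge_add_one_self[of "- p l"] by simp
  finally show ?thesis by simp
qed

lemma Phis_step: "0 \<le> t \<Longrightarrow> Phis (t + 1) \<le> Phis t + 1"
proof -
  assume t: "0 \<le> t"
  have "Phis (t + 1) \<le> (\<Sum>l. pii t (Suc l) + p (Suc l))"
    unfolding Phis_def using summable_pii[of "t+1"] summable_pii[OF t] t psum pii_step[OF t]
    by (intro suminf_le summable_add) (auto simp: sums_summable)
  also have "\<dots> = Phis t + 1"
    unfolding Phis_def using summable_pii[OF t] psum
    by (subst suminf_add[symmetric]) (auto simp: sums_summable sums_unique[symmetric])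
  finally show ?thesis .
qed

lemma Phis_0: "Phis 0 = 0"
  unfolding Phis_def pii_def by simp

lemma Phis_tendsto: "filterlim (\<lambda>n::nat. Phis (real n)) at_top sequentially"
proof (subst filterlim_at_top, intro allI)
  fix Z :: real
  obtain L :: nat where L: "Z < real L" using reals_Archimedean2 by blast
  have "(\<lambda>n::nat. PhiF (real n) L) \<longlonglongrightarrow> (\<Sum>l\<in>{1..L}. 1 - 0)"
    unfolding PhiF_def pii_def
  proof (intro tendsto_intros)
    fix l assume "l \<in> {1..L}"
    then have pl: "0 < p l" using p_pos by auto
    have "(\<lambda>n. exp (- p l) ^ n) \<longlonglongrightarrow> 0"
      using pl by (intro LIMSEQ_power_zero) auto
    then show "(\<lambda>n. exp (- real n * p l)) \<longlonglongrightarrow> 0"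
      by (simp add: exp_of_nat_mult[symmetric] mult.commute)
  qed
  then have "(\<lambda>n::nat. PhiF (real n) L) \<longlonglongrightarrow> real L" by simp
  then have "eventually (\<lambda>n. Z < PhiF (real n) L) sequentially"
    using L by (intro order_tendstoD(1)) auto
  then show "eventually (\<lambda>n. Z \<le> Phis (real n)) sequentially"
  proof eventually_elim
    case (elim n)
    have "PhiF (real n) L \<le> Phis (real n)" by (rule PhiF_le_Phis) simp
    then show ?case using elim by linarith
  qed
qed

lemma Ktil_mono:
  assumes "good \<omega>" "t \<le> t'"
  shows "Ktil Y E t \<omega> \<le> Ktil Y E t' \<omega>"
  unfolding Ktil_eq using assms good_finite[OF assms(1), of t']
  by (intro card_mono) (auto simp: Hs_def hit_def)

end

lemma interp:
  fixes a x :: "nat \<Rightarrow> real" and nk :: "nat \<Rightarrow> nat"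
  assumes amono: "mono a" and xmono: "mono x" and x0: "\<And>n. 0 \<le> x n"
  and atop: "filterlim a at_top sequentially" and astep: "\<And>n. a (Suc n) \<le> a n + 1" and a0: "a 0 < 1"
  and nk_def: "\<And>k. nk k = (LEAST n. real (k^2) \<le> a n)"
  and sub: "(\<lambda>k. x (nk k) / a (nk k)) \<longlonglongrightarrow> 1"
  shows "(\<lambda>n. x n / a n) \<longlonglongrightarrow> 1"
proof -
  have ex: "\<exists>n. real (k^2) \<le> a n" for k
    using atop unfolding filterlim_at_top by (metis eventually_sequentially order_refl)
  have nkP: "real (k^2) \<le> a (nk k)" for k
    unfolding nk_def by (rule LeastI_ex[OF ex])
  have nk_le: "real (k^2) \<le> a n \<Longrightarrow> nk k \<le> n" for k n
    unfolding nk_def by (rule Least_le)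
  have nk_up: "a (nk k) \<le> real (k^2) + 1" if k: "1 \<le> k" for k
  proof -
    have "nk k \<noteq> 0"
    proof
      assume "nk k = 0"
      then have "real (k^2) \<le> a 0" using nkP[of k] by simp
      moreover have "1 \<le> real (k^2)" using k by simp
      ultimately show False using a0 by linarith
    qed
    then obtain m where m: "nk k = Suc m" using not0_implies_Suc by blast
    have "\<not> real (k^2) \<le> a m"
      using m nk_le[of k m] by auto
    then show ?thesis using astep[of m] m by simp
  qed
  define r where "r k = x (nk k) / a (nk k)" for k
  define D where "D k = r k * (real (k^2) / (real ((k+1)^2) + 1))" for k
  define U where "U k = r (k+1) * ((real ((k+1)^2) + 1) / real (k^2))" for k
  have f1: "(\<lambda>k::nat. real (k^2) / (real ((k+1)^2) + 1)) \<longlonglongrightarrow> 1" by real_asymp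
  have f2: "(\<lambda>k::nat. (real ((k+1)^2) + 1) / real (k^2)) \<longlonglongrightarrow> 1" by real_asymp
  have r1: "r \<longlonglongrightarrow> 1" using sub unfolding r_def .
  have Dl: "D \<longlonglongrightarrow> 1" unfolding D_def using tendsto_mult[OF r1 f1] by simp
  have Ul: "U \<longlonglongrightarrow> 1" unfolding U_def using tendsto_mult[OF r1[THEN LIMSEQ_Suc] f2] by simp
  define kn where "kn n = nat \<lfloor>sqrt (a n)\<rfloor>" for n
  have knl: "filterlim kn at_top sequentially"
  proof (subst filterlim_at_top, intro allI)
    fix Z :: nat
    have "eventually (\<lambda>n. real ((Z+1)^2) \<le> a n) sequentially"
      using atop unfolding filterlim_at_top by blast
    then show "eventually (\<lambda>n. Z \<le> kn n) sequentially"
    proof eventually_elim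
      case (elim n)
      then have "sqrt (real ((Z+1)^2)) \<le> sqrt (a n)" by (intro real_sqrt_le_mono)
      then have "real Z + 1 \<le> sqrt (a n)" by simp
      then have "int Z + 1 \<le> \<lfloor>sqrt (a n)\<rfloor>" by (simp add: le_floor_iff)
      then show ?case unfolding kn_def by linarith
    qed
  qed
  have ev1: "eventually (\<lambda>n. 1 \<le> a n) sequentially"
    using atop unfolding filterlim_at_top by blast
  have bounds: "D (kn n) \<le> x n / a n \<and> x n / a n \<le> U (kn n)" if an: "1 \<le> a n" for n
  proof -
    define k where "k = kn n"
    have s0: "1 \<le> sqrt (a n)" using an by simp
    have fi: "1 \<le> \<lfloor>sqrt (a n)\<rfloor>" using s0 by (simp add: le_floor_iff)
    have fk: "real k = of_int \<lfloor>sqrt (a n)\<rfloor>" unfolding k_def kn_def using fi by simp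
    have fl: "real k \<le> sqrt (a n)" "sqrt (a n) < real k + 1"
      unfolding fk by (rule of_int_floor_le, rule real_of_int_floor_add_one_gt)
    have k1: "1 \<le> k" unfolding k_def kn_def using fi by linarith
    have "real k ^ 2 \<le> sqrt (a n) ^ 2" using fl(1) by (intro power_mono) auto
    then have ka: "real (k^2) \<le> a n" using an by simp
    have "sqrt (a n) ^ 2 < (real k + 1) ^ 2" using fl(2) s0 by (intro power_strict_mono) auto
    then have ak: "a n < real ((k+1)^2)" using an by (simp add: add.commute)
    have n1: "nk k \<le> n" by (rule nk_le[OF ka])
    have n2: "n \<le> nk (k+1)"
    proof (rule ccontr)
      assume "\<not> n \<le> nk (k+1)"
      then have "a (nk (k+1)) \<le> a n" using amono by (auto simp: mono_def)
      then show False using nkP[of "k+1"] ak by linarith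
    qed
    have A1: "real (k^2) \<le> a (nk k)" by (rule nkP)
    have A1n: "a (nk k) \<le> a n" using n1 amono by (auto simp: mono_def)
    have A2n: "a n \<le> a (nk (k+1))" using n2 amono by (auto simp: mono_def)
    have A2: "a (nk (k+1)) \<le> real ((k+1)^2) + 1" using nk_up[of "k+1"] by simp
    have X1: "x (nk k) \<le> x n" using n1 xmono by (auto simp: mono_def)
    have X2: "x n \<le> x (nk (k+1))" using n2 xmono by (auto simp: mono_def)
    have kpos: "0 < real (k^2)" using k1 by simp
    have A1p: "0 < a (nk k)" using A1 kpos by linarith
    have anp: "0 < a n" using an by linarith
    have A2p: "0 < a (nk (k+1))" using A2n anp by linarith
    have "D k = x (nk k) / a (nk k) * (real (k^2) / (real ((k+1)^2) + 1))"
      unfolding D_def r_def ..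
    also have "\<dots> \<le> x (nk k) / a (nk k) * (a (nk k) / a (nk (k+1)))"
      using A1 A2 kpos A1p A2p x0[of "nk k"]
      by (intro mult_left_mono frac_le) auto
    also have "\<dots> = x (nk k) / a (nk (k+1))" using A1p by simp
    also have "\<dots> \<le> x n / a n"
      using X1 A2n anp x0[of "nk k"] by (intro frac_le) auto
    finally have lo: "D k \<le> x n / a n" .
    have "x n / a n \<le> x (nk (k+1)) / a (nk k)"
      using X2 A1n A1p x0[of n] x0[of "nk (k+1)"] by (intro frac_le) auto
    also have "\<dots> = x (nk (k+1)) / a (nk (k+1)) * (a (nk (k+1)) / a (nk k))" using A2p by simp
    also have "\<dots> \<le> x (nk (k+1)) / a (nk (k+1)) * ((real ((k+1)^2) + 1) / real (k^2))"
      using A1 A2 kpos A1p A2p x0[of "nk (k+1)"]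
      by (intro mult_left_mono frac_le) auto
    also have "\<dots> = U k" unfolding U_def r_def by simp
    finally show ?thesis using lo unfolding k_def by simp
  qed
  show ?thesis
  proof (rule tendsto_sandwich)
    show "eventually (\<lambda>n. D (kn n) \<le> x n / a n) sequentially"
      using ev1 by eventually_elim (use bounds in blast)
    show "eventually (\<lambda>n. x n / a n \<le> U (kn n)) sequentially"
      using ev1 by eventually_elim (use bounds in blast)
    show "(\<lambda>n. D (kn n)) \<longlonglongrightarrow> 1" by (rule filterlim_compose[OF Dl knl])
    show "(\<lambda>n. U (kn n)) \<longlonglongrightarrow> 1" by (rule filterlim_compose[OF Ul knl])
  qed
qed

context kset begin

definition nk :: "nat \<Rightarrow> nat" where
  "nk k = (LEAST n. real (k^2) \<le> Phis (real n))"

lemma nk_ex: "\<exists>n. real (k^2) \<le> Phis (real n)"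
  using Phis_tendsto unfolding filterlim_at_top by (metis eventually_sequentially order_refl)

lemma nkP: "real (k^2) \<le> Phis (real (nk k))"
  unfolding nk_def by (rule LeastI_ex[OF nk_ex])

lemma BC_eps:
  assumes e: "0 < e"
  shows "AE \<omega> in M. eventually (\<lambda>k. \<bar>real (Ktil Y E (real (nk (Suc k))) \<omega>) / Phis (real (nk (Suc k))) - 1\<bar> < e) sequentially"
proof -
  define A where "A k = {\<omega>\<in>space M. e * Phis (real (nk (Suc k))) \<le> \<bar>real (Ktil Y E (real (nk (Suc k))) \<omega>) - Phis (real (nk (Suc k)))\<bar>}" for k
  have Am: "A k \<in> events" for k unfolding A_def by measurable
  have pA: "prob (A k) \<le> 4 / e^2 * inverse (real (Suc k) ^ 2)" for k
  proof -
    define P where "P = Phis (real (nk (Suc k)))"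
    have P1: "real (Suc k ^ 2) \<le> P" unfolding P_def by (rule nkP)
    have Pp: "0 < P" using P1 by (metis le_less_trans not_le of_nat_0_less_iff zero_less_Suc zero_less_power)
    have "prob (A k) \<le> 4 * P / (e * P)^2"
      using cheb[of "real (nk (Suc k))" "e * P"] e Pp unfolding A_def P_def by auto
    also have "\<dots> = 4 / e^2 * inverse P"
      using Pp e by (simp add: power2_eq_square field_simps)
    also have "\<dots> \<le> 4 / e^2 * inverse (real (Suc k ^ 2))"
      using P1 e by (intro mult_left_mono le_imp_inverse_le) auto
    finally show ?thesis by simp
  qed
  have s: "summable (\<lambda>k. 4 / e^2 * inverse (real (Suc k) ^ 2))"
  proof (intro summable_mult)
    have "summable (\<lambda>n. inverse (real n ^ 2))"
      using inverse_power_summable[of 2, where 'a=real] by simp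
    then have "summable (\<lambda>n. inverse (real (Suc n) ^ 2))"
      using summable_Suc_iff[where f="\<lambda>n. inverse (real n ^ 2)"] by blast
    then show "summable (\<lambda>k. inverse (real (Suc k) ^ 2))" .
  qed
  have "summable (\<lambda>k. prob (A k))"
    by (rule summable_comparison_test[OF _ s]) (use pA in auto)
  then have "AE \<omega> in M. eventually (\<lambda>k. \<omega> \<in> space M - A k) sequentially"
    by (intro borel_cantelli_AE1 Am) (auto simp: emeasure_eq_measure)
  then show ?thesis
  proof eventually_elim
    case (elim \<omega>)
    then show ?case
    proof eventually_elim
      case (elim k)
      define P where "P = Phis (real (nk (Suc k)))"
      have P1: "real (Suc k ^ 2) \<le> P" unfolding P_def by (rule nkP)
      have Pp: "0 < P" using P1 by (metis le_less_trans not_le of_nat_0_less_iff zero_less_Suc zero_less_power)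
      have "\<bar>real (Ktil Y E (real (nk (Suc k))) \<omega>) - P\<bar> < e * P"
        using elim unfolding A_def P_def by auto
      then have "\<bar>real (Ktil Y E (real (nk (Suc k))) \<omega>) / P - 1\<bar> < e"
        using Pp by (simp add: abs_less_iff field_simps)
      then show ?case unfolding P_def .
    qed
  qed
qed

lemma as_sub: "AE \<omega> in M. (\<lambda>k. real (Ktil Y E (real (nk k)) \<omega>) / Phis (real (nk k))) \<longlonglongrightarrow> 1"
proof -
  have "AE \<omega> in M. \<forall>j. eventually (\<lambda>k. \<bar>real (Ktil Y E (real (nk (Suc k))) \<omega>) / Phis (real (nk (Suc k))) - 1\<bar> < inverse (real (Suc j))) sequentially"
    by (subst AE_all_countable) (auto intro!: BC_eps)
  then show ?thesis
  proof eventually_elim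
    case (elim \<omega>)
    have "(\<lambda>k. real (Ktil Y E (real (nk (Suc k))) \<omega>) / Phis (real (nk (Suc k)))) \<longlonglongrightarrow> 1"
    proof (rule LIMSEQ_I)
      fix r :: real assume r: "0 < r"
      obtain j where j: "inverse (real (Suc j)) < r" using reals_Archimedean[OF r] by blast
      from elim[rule_format, of j] obtain N where
        N: "\<And>k. k \<ge> N \<Longrightarrow> \<bar>real (Ktil Y E (real (nk (Suc k))) \<omega>) / Phis (real (nk (Suc k))) - 1\<bar> < inverse (real (Suc j))"
        unfolding eventually_sequentially by blast
      show "\<exists>N. \<forall>k\<ge>N. norm (real (Ktil Y E (real (nk (Suc k))) \<omega>) / Phis (real (nk (Suc k))) - 1) < r"
        using N j by (intro exI[of _ N]) (auto intro: less_trans)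
    qed
    then show ?case by (rule LIMSEQ_imp_Suc)
  qed
qed

lemma as_conv: "AE \<omega> in M. (\<lambda>n. real (Ktil Y E (real n) \<omega>) / Phis (real n)) \<longlonglongrightarrow> 1"
  using as_sub AE_good
proof eventually_elim
  case (elim \<omega>)
  show ?case
  proof (rule interp[where nk=nk])
    show "mono (\<lambda>n. Phis (real n))" by (intro monoI Phis_mono) auto
    show "mono (\<lambda>n. real (Ktil Y E (real n) \<omega>))" using elim(2) by (intro monoI) (auto intro: Ktil_mono)
    show "filterlim (\<lambda>n. Phis (real n)) at_top sequentially" by (rule Phis_tendsto)
    show "Phis (real (Suc n)) \<le> Phis (real n) + 1" for n using Phis_step[of "real n"] by (simp add: add.commute)
    show "Phis (real 0) < 1" by (simp add: Phis_0)
  qed (use elim nk_def in auto)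
qed

end

lemma exp_m1_lt: "exp (-1::real) < 1/2"
proof -
  have "1 + 1 + 1/2 \<le> exp (1::real)"
    using exp_lower_Taylor_quadratic[of 1] by simp
  then have "2 < exp (1::real)" by simp
  then show ?thesis by (simp add: exp_minus field_simps)
qed

lemma poly_exp_lim:
  fixes k q :: real
  assumes "0 < k"
  shows "((\<lambda>x. (x + 1) powr q * exp (- k * x)) \<longlongrightarrow> 0) at_top"
  using assms by real_asymp

context kset begin

lemma main:
  fixes c :: real
  defines "\<Phi> \<equiv> (\<lambda>n::nat. integral\<^sup>L M (\<lambda>\<omega>. real (Ktil Y E (real n) \<omega>)))"
  defines "R \<equiv> (\<lambda>(n::nat) \<omega>. \<Phi> n / max (real (Ktil Y E (real n) \<omega>) + c) 1)"
  shows "(AE \<omega> in M. (\<lambda>n. R n \<omega>) \<longlonglongrightarrow> 1)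
       \<and> (\<forall>q::real. q \<ge> 1 \<longrightarrow>
            (\<forall>n. integrable M (\<lambda>\<omega>. \<bar>R n \<omega> - 1\<bar> powr q)) \<and>
            (\<lambda>n. integral\<^sup>L M (\<lambda>\<omega>. \<bar>R n \<omega> - 1\<bar> powr q)) \<longlonglongrightarrow> 0)"
proof -
  define P where "P n = Phis (real n)" for n :: nat
  define K where "K n \<omega> = real (Ktil Y E (real n) \<omega>)" for n :: nat and \<omega>
  have Peq: "\<Phi> n = P n" for n unfolding \<Phi>_def P_def by (rule Kr_int(2)) simp
  have Req: "R n \<omega> = P n / max (K n \<omega> + c) 1" for n \<omega> unfolding R_def Peq K_def by simp
  have Ptop: "filterlim P at_top sequentially" unfolding P_def by (rule Phis_tendsto)
  have Pnn: "0 \<le> P n" for n unfolding P_def by (rule Phis_nonneg) simp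
  have Knn: "0 \<le> K n \<omega>" for n \<omega> unfolding K_def by simp
  have Km[measurable]: "K n \<in> borel_measurable M" for n unfolding K_def[abs_def] by measurable
  have Rm[measurable]: "(\<lambda>\<omega>. R n \<omega>) \<in> borel_measurable M" for n unfolding Req by measurable
  have Rnn: "0 \<le> R n \<omega>" for n \<omega> unfolding Req using Pnn[of n] by simp
  have Rle: "R n \<omega> \<le> P n" for n \<omega>
    unfolding Req using Pnn[of n] by (simp add: divide_le_eq_1 field_simps divide_le_cancel mult_le_cancel_left1 le_divide_eq)
  have R1: "\<bar>R n \<omega> - 1\<bar> \<le> P n + 1" for n \<omega> using Rnn[of n \<omega>] Rle[of n \<omega>] by linarith
  have cP: "(\<lambda>n. c / P n) \<longlonglongrightarrow> 0"
    by (rule tendsto_divide_0[OF tendsto_const filterlim_at_top_imp_at_infinity[OF Ptop]])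
  have partA: "AE \<omega> in M. (\<lambda>n. R n \<omega>) \<longlonglongrightarrow> 1"
    using as_conv
  proof eventually_elim
    case (elim \<omega>)
    then have KP: "(\<lambda>n. K n \<omega> / P n) \<longlonglongrightarrow> 1" unfolding K_def P_def .
    have lim1: "(\<lambda>n. 1 / (K n \<omega> / P n + c / P n)) \<longlonglongrightarrow> 1 / (1 + 0)"
      by (intro tendsto_intros KP cP) simp
    have e1: "eventually (\<lambda>n. 1/2 < K n \<omega> / P n) sequentially"
      using KP by (intro order_tendstoD(1)) auto
    have e2: "eventually (\<lambda>n. 2 * (1 + \<bar>c\<bar>) \<le> P n) sequentially"
      using Ptop unfolding filterlim_at_top by blast
    have "eventually (\<lambda>n. 1 / (K n \<omega> / P n + c / P n) = R n \<omega>) sequentially"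
      using e1 e2
    proof eventually_elim
      case (elim n)
      have Pp: "0 < P n" using elim(2) abs_ge_minus_self[of c] abs_ge_zero[of c] by (smt (verit))
      have "P n / 2 < K n \<omega>" using elim(1) Pp by (simp add: field_simps)
      moreover have "1 + \<bar>c\<bar> \<le> P n / 2" using elim(2) by simp
      ultimately have "1 + \<bar>c\<bar> < K n \<omega>" by linarith
      then have Kc: "1 \<le> K n \<omega> + c" using abs_ge_minus_self[of c] by linarith
      then have "R n \<omega> = P n / (K n \<omega> + c)" unfolding Req by simp
      then show ?case using Pp Kc by (simp add: field_simps)
    qed
    then show ?case using lim1 by (simp add: tendsto_cong)
  qed
  have partB: "(\<forall>n. integrable M (\<lambda>\<omega>. \<bar>R n \<omega> - 1\<bar> powr q)) \<and>
            (\<lambda>n. integral\<^sup>L M (\<lambda>\<omega>. \<bar>R n \<omega> - 1\<bar> powr q)) \<longlonglongrightarrow> 0" if q: "1 \<le> q" for q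
  proof -
    have q0: "0 < q" using q by simp
    have intR: "integrable M (\<lambda>\<omega>. \<bar>R n \<omega> - 1\<bar> powr q)" for n
    proof (rule int_bounded[where B="(P n + 1) powr q"])
      fix \<omega> show "\<bar>\<bar>R n \<omega> - 1\<bar> powr q\<bar> \<le> (P n + 1) powr q"
        using R1[of n \<omega>] q0 by (simp add: powr_mono2)
    qed measurable
    define g where "g n \<omega> = min (\<bar>R n \<omega> - 1\<bar> powr q) (3 powr q)" for n \<omega>
    have gm[measurable]: "g n \<in> borel_measurable M" for n unfolding g_def[abs_def] by measurable
    have gnn: "0 \<le> g n \<omega>" for n \<omega> unfolding g_def by simp
    have intg: "integrable M (g n)" for n
      by (rule int_bounded[where B="3 powr q"]) (auto simp: g_def)
    have glim: "(\<lambda>n. integral\<^sup>L M (g n)) \<longlonglongrightarrow> integral\<^sup>L M (\<lambda>_. 0::real)"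
    proof (rule integral_dominated_convergence[where w="\<lambda>_. 3 powr q"])
      show "AE \<omega> in M. (\<lambda>n. g n \<omega>) \<longlonglongrightarrow> 0"
        using partA
      proof eventually_elim
        case (elim \<omega>)
        have "(\<lambda>n. \<bar>R n \<omega> - 1\<bar>) \<longlonglongrightarrow> \<bar>1 - 1\<bar>" by (intro tendsto_intros elim)
        then have "(\<lambda>n. \<bar>R n \<omega> - 1\<bar> powr q) \<longlonglongrightarrow> 0"
          using q0 by (intro tendsto_zero_powrI[where b=q]) auto
        then have "(\<lambda>n. min (\<bar>R n \<omega> - 1\<bar> powr q) (3 powr q)) \<longlonglongrightarrow> min 0 (3 powr q)"
          by (intro tendsto_intros)
        then show ?case by (simp add: g_def)
      qed
      show "AE \<omega> in M. norm (g n \<omega>) \<le> 3 powr q" for n by (auto simp: g_def)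
    qed auto
    define \<kappa> where "\<kappa> = 1/2 - exp (-1::real)"
    have \<kappa>: "0 < \<kappa>" unfolding \<kappa>_def using exp_m1_lt by simp
    have tail: "(\<lambda>n. (P n + 1) powr q * exp (- \<kappa> * P n)) \<longlonglongrightarrow> 0"
      by (rule filterlim_compose[OF poly_exp_lim[OF \<kappa>] Ptop])
    have up: "integral\<^sup>L M (\<lambda>\<omega>. \<bar>R n \<omega> - 1\<bar> powr q) \<le> integral\<^sup>L M (g n) + (P n + 1) powr q * exp (- \<kappa> * P n)"
      if Pn: "4 + 4 * \<bar>c\<bar> \<le> P n" for n
    proof -
      define B where "B = {\<omega>\<in>space M. K n \<omega> \<le> P n / 2}"
      have Bm: "B \<in> events" unfolding B_def by measurable
      have pw: "\<bar>R n \<omega> - 1\<bar> powr q \<le> g n \<omega> + (P n + 1) powr q * indicator B \<omega>" if \<omega>: "\<omega> \<in> space M" for \<omega>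
      proof (cases "K n \<omega> \<le> P n / 2")
        case True
        then show ?thesis using \<omega> gnn[of n \<omega>] R1[of n \<omega>] q0
          by (simp add: B_def powr_mono2 add_increasing)
      next
        case False
        moreover have "1 + \<bar>c\<bar> \<le> P n / 4" using Pn by simp
        ultimately have Kc: "P n / 4 + 1 \<le> K n \<omega> + c" using abs_ge_minus_self[of c] by linarith
        have Pp: "0 < P n" using Pn abs_ge_minus_self[of c] abs_ge_zero[of c] by (smt (verit))
        have "R n \<omega> = P n / (K n \<omega> + c)" unfolding Req using Kc Pp by simp
        also have "\<dots> \<le> P n / (P n / 4)" using Kc Pp by (intro divide_left_mono) auto
        also have "\<dots> = 4" using Pp by simp
        finally have "\<bar>R n \<omega> - 1\<bar> \<le> 3" using Rnn[of n \<omega>] by linarith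
        then have "\<bar>R n \<omega> - 1\<bar> powr q \<le> 3 powr q" using q0 by (simp add: powr_mono2)
        then show ?thesis using False by (simp add: g_def B_def)
      qed
      have "integral\<^sup>L M (\<lambda>\<omega>. \<bar>R n \<omega> - 1\<bar> powr q) \<le> integral\<^sup>L M (\<lambda>\<omega>. g n \<omega> + (P n + 1) powr q * indicator B \<omega>)"
        using pw intR intg Bm by (intro integral_mono) (auto intro!: Bochner_Integration.integrable_add integrable_real_indicator simp: emeasure_eq_measure)
      also have "\<dots> = integral\<^sup>L M (g n) + (P n + 1) powr q * prob B"
        using intg Bm by (subst Bochner_Integration.integral_add) (auto intro!: integrable_real_indicator simp: emeasure_eq_measure)
      also have "\<dots> \<le> integral\<^sup>L M (g n) + (P n + 1) powr q * exp (- \<kappa> * P n)"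
        using lower_tail[of "real n"] unfolding B_def K_def P_def \<kappa>_def
        by (intro add_left_mono mult_left_mono) auto
      finally show ?thesis .
    qed
    have "(\<lambda>n. integral\<^sup>L M (\<lambda>\<omega>. \<bar>R n \<omega> - 1\<bar> powr q)) \<longlonglongrightarrow> 0"
    proof (rule tendsto_sandwich)
      show "eventually (\<lambda>n. 0 \<le> integral\<^sup>L M (\<lambda>\<omega>. \<bar>R n \<omega> - 1\<bar> powr q)) sequentially"
        by (auto intro!: integral_nonneg_AE)
      show "eventually (\<lambda>n. integral\<^sup>L M (\<lambda>\<omega>. \<bar>R n \<omega> - 1\<bar> powr q) \<le> integral\<^sup>L M (g n) + (P n + 1) powr q * exp (- \<kappa> * P n)) sequentially"
      proof -
        have "eventually (\<lambda>n. 4 + 4 * \<bar>c\<bar> \<le> P n) sequentially"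
          using Ptop unfolding filterlim_at_top by blast
        then show ?thesis by eventually_elim (rule up)
      qed
      show "(\<lambda>n. integral\<^sup>L M (g n) + (P n + 1) powr q * exp (- \<kappa> * P n)) \<longlonglongrightarrow> 0"
        using tendsto_add[OF glim tail] by simp
    qed simp
    then show ?thesis using intR by blast
  qed
  show ?thesis using partA partB by blast
qed

end

theorem lemma5p2:
  fixes M :: "'a measure" and p :: "nat \<Rightarrow> real" and \<beta> :: real
    and Y :: "nat \<Rightarrow> 'a \<Rightarrow> nat" and E :: "nat \<Rightarrow> 'a \<Rightarrow> real" and c :: real
  assumes "prob_space M"
    and "0 < \<beta>" and "\<beta> < 1"
    and "\<forall>l\<ge>1. 0 < p l"
    and "\<forall>l\<ge>1. p (Suc l) \<le> p l"
    and "(\<lambda>l. p (Suc l)) sums 1"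
    and "\<exists>L. slowly_varying L \<and> (\<forall>\<^sub>F x in at_top. real (nu_count p x) = x powr \<beta> * L x)"
    and "\<forall>i. Y i \<in> measurable M (count_space UNIV)"
    and "\<forall>i l. l \<ge> 1 \<longrightarrow> measure M {\<omega> \<in> space M. Y i \<omega> = l} = p l"
    and "\<forall>j. distributed M lborel (E j) (exponential_density 1)"
    and "prob_space.indep_vars M (\<lambda>_. borel)
           (\<lambda>k. case k of Inl i \<Rightarrow> (\<lambda>\<omega>. real (Y i \<omega>)) | Inr j \<Rightarrow> E j) UNIV"
  defines "\<Phi> \<equiv> (\<lambda>n::nat. integral\<^sup>L M (\<lambda>\<omega>. real (Ktil Y E (real n) \<omega>)))"
  defines "R \<equiv> (\<lambda>(n::nat) \<omega>. \<Phi> n / max (real (Ktil Y E (real n) \<omega>) + c) 1)"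
  shows "(AE \<omega> in M. (\<lambda>n. R n \<omega>) \<longlonglongrightarrow> 1)
       \<and> (\<forall>q::real. q \<ge> 1 \<longrightarrow>
            (\<forall>n. integrable M (\<lambda>\<omega>. \<bar>R n \<omega> - 1\<bar> powr q)) \<and>
            (\<lambda>n. integral\<^sup>L M (\<lambda>\<omega>. \<bar>R n \<omega> - 1\<bar> powr q)) \<longlonglongrightarrow> 0)"
proof -
  have ka: "kset_axioms M p Y E"
    by (rule kset_axioms.intro[OF assms(4) assms(6) assms(8) assms(9) assms(10) assms(11)])
  interpret kset M p Y E
    by (rule kset.intro[OF assms(1) ka])
  have m: "(AE \<omega> in M. (\<lambda>n. R n \<omega>) \<longlonglongrightarrow> 1)
       \<and> (\<forall>q::real. q \<ge> 1 \<longrightarrow>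
            (\<forall>n. integrable M (\<lambda>\<omega>. \<bar>R n \<omega> - 1\<bar> powr q)) \<and>
            (\<lambda>n. integral\<^sup>L M (\<lambda>\<omega>. \<bar>R n \<omega> - 1\<bar> powr q)) \<longlonglongrightarrow> 0)"
    unfolding R_def \<Phi>_def by (rule main)
  show ?thesis by (rule m)
qed


end
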